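(* Let $I_{\mathrm{C}}=\langle p_1,p_2,p_3\rangle$ be the ideal of $\mathbb{Q}[x_1,x_2,x_3,d_1,d_2,d_3,L]$ generated by $p_1,p_2,p_3$, and let $I_{\mathrm{C\_sym}}=I_{\mathrm{C}}\cap \operatorname{Sym}\mathbb{Q}[M,L]$. Then $I_{\mathrm{C\_sym}}$ is finitely generated as an ideal of the ring $\operatorname{Sym}\mathbb{Q}[M,L]$; the seven polynomials $\tilde p_2,\tilde p_3,\tilde p_4,\tilde p_5,\tilde p_6,\tilde p_7,\tilde p_8$ belong to $I_{\mathrm{C\_sym}}$ and generate it as an ideal of $\operatorname{Sym}\mathbb{Q}[M,L]$.
   Context: Work in the polynomial ring $\mathbb{Q}[M,L]=\mathbb{Q}[x_1,x_2,x_3,d_1,d_2,d_3,L]$. Define $p_1=x_2^2+x_3^2-d_1^2$, $p_2=x_3^2+x_1^2-d_2^2$, $p_3=x_1^2+x_2^2-d_3^2$. The symmetric group $S_3$ acts on this ring by $\sigma(x_i)=x_{\sigma(i)}$, $\sigma(d_i)=d_{\sigma(i)}$, $\sigma(L)=L$ (i.e. by simultaneously permuting the columns of the matrix $M=\begin{pmatrix}x_1&x_2&x_3\\ d_1&d_2&d_3\end{pmatrix}$). $\operatorname{Sym}\mathbb{Q}[M,L]$ denotes the subring of polynomials invariant under this action (multisymmetric polynomials). Define $\tilde p_2=p_1+p_2+p_3$, $\tilde p_3=d_1p_1+d_2p_2+d_3p_3$, $\tilde p_4=x_1p_1+x_2p_2+x_3p_3$, $\tilde p_5=x_1d_1p_1+x_2d_2p_2+x_3d_3p_3$,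 $\tilde p_6=x_1^2p_1+x_2^2p_2+x_3^2p_3$, $\tilde p_7=d_1^2p_1+d_2^2p_2+d_3^2p_3$, $\tilde p_8=x_1^2d_1^2p_1+x_2^2d_2^2p_2+x_3^2d_3^2p_3$. *)

theory Defs
  imports Complex_Main "HOL-Library.Poly_Mapping"
begin

text \<open>Column indices 1,2,3 of the matrix M.\<close>
datatype idx = I1 | I2 | I3

datatype var = X idx | D idx | Lv

text \<open>The polynomial ring Q[x1,x2,x3,d1,d2,d3,L]: finitely supported maps from
  monomials (exponent vectors var =>0 nat) to rational coefficients, with the
  convolution product of HOL-Library.Poly_Mapping.\<close>
type_synonym qpoly = "(var \<Rightarrow>\<^sub>0 nat) \<Rightarrow>\<^sub>0 rat"

definition Var :: "var \<Rightarrow> qpoly" where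
  "Var v = Poly_Mapping.single (Poly_Mapping.single v 1) 1"

abbreviation x :: "idx \<Rightarrow> qpoly" where "x i \<equiv> Var (X i)"
abbreviation d :: "idx \<Rightarrow> qpoly" where "d i \<equiv> Var (D i)"

fun var_perm :: "(idx \<Rightarrow> idx) \<Rightarrow> var \<Rightarrow> var" where
  "var_perm \<sigma> (X i) = X (\<sigma> i)"
| "var_perm \<sigma> (D i) = D (\<sigma> i)"
| "var_perm \<sigma> Lv = Lv"

text \<open>Induced ring automorphism: the coefficient of monomial n in sigma(p) is the
  coefficient of monomial (n o var_perm sigma) in p; hence sigma(x_i) = x_(sigma i),
  sigma(d_i) = d_(sigma i), sigma(L) = L.\<close>
definition poly_perm :: "(idx \<Rightarrow> idx) \<Rightarrow> qpoly \<Rightarrow> qpoly" where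
  "poly_perm \<sigma> p = Poly_Mapping.map_key (\<lambda>n. Poly_Mapping.map_key (var_perm \<sigma>) n) p"

definition SymQ :: "qpoly set" where
  "SymQ = {p. \<forall>\<sigma>. bij \<sigma> \<longrightarrow> poly_perm \<sigma> p = p}"

definition ideal_gen_in :: "'a::comm_ring_1 set \<Rightarrow> 'a list \<Rightarrow> 'a set" where
  "ideal_gen_in S gs = {(\<Sum>j<length gs. c j * gs ! j) | c. \<forall>j<length gs. c j \<in> S}"

definition p1 :: qpoly where "p1 = x I2 ^ 2 + x I3 ^ 2 - d I1 ^ 2"
definition p2 :: qpoly where "p2 = x I3 ^ 2 + x I1 ^ 2 - d I2 ^ 2"
definition p3 :: qpoly where "p3 = x I1 ^ 2 + x I2 ^ 2 - d I3 ^ 2"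

definition I_C :: "qpoly set" where
  "I_C = ideal_gen_in UNIV [p1, p2, p3]"

definition I_C_sym :: "qpoly set" where
  "I_C_sym = I_C \<inter> SymQ"

definition pt2 :: qpoly where "pt2 = p1 + p2 + p3"
definition pt3 :: qpoly where "pt3 = d I1 * p1 + d I2 * p2 + d I3 * p3"
definition pt4 :: qpoly where "pt4 = x I1 * p1 + x I2 * p2 + x I3 * p3"
definition pt5 :: qpoly where
  "pt5 = x I1 * d I1 * p1 + x I2 * d I2 * p2 + x I3 * d I3 * p3"
definition pt6 :: qpoly where
  "pt6 = x I1 ^ 2 * p1 + x I2 ^ 2 * p2 + x I3 ^ 2 * p3"
definition pt7 :: qpoly where
  "pt7 = d I1 ^ 2 * p1 + d I2 ^ 2 * p2 + d I3 ^ 2 * p3"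
definition pt8 :: qpoly where
  "pt8 = x I1 ^ 2 * d I1 ^ 2 * p1 + x I2 ^ 2 * d I2 ^ 2 * p2 + x I3 ^ 2 * d I3 ^ 2 * p3"

end

theory Submission
  imports Defs
begin

definition Eg :: "(idx \<Rightarrow> 'a::comm_ring_1) \<Rightarrow> (idx \<Rightarrow> 'a) \<Rightarrow> nat \<Rightarrow> nat \<Rightarrow> 'a" where
  "Eg U W a b = U I1^a * W I1^b + U I2^a * W I2^b + U I3^a * W I3^b"

definition Fg :: "(idx \<Rightarrow> 'a::comm_ring_1) \<Rightarrow> (idx \<Rightarrow> 'a) \<Rightarrow> nat \<Rightarrow> nat \<Rightarrow> 'a" where
  "Fg U W a b = U I1^a * W I1^b * (U I2^2 + U I3^2 - W I1^2) + U I2^a * W I2^b * (U I3^2 + U I1^2 - W I2^2)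
     + U I3^a * W I3^b * (U I1^2 + U I2^2 - W I3^2)"

lemma F21g: fixes U W :: "idx \<Rightarrow> 'a::comm_ring_1"
  shows "6 * Fg U W 2 1 = (2*Eg U W 2 1 - 2*Eg U W 1 0*Eg U W 1 1 - Eg U W 0 1*Eg U W 2 0 + Eg U W 0 1*Eg U W 1 0^2) * Fg U W 0 0 + (Eg U W 2 0 - Eg U W 1 0^2) * Fg U W 0 1 + (2*Eg U W 1 1 - 2*Eg U W 0 1*Eg U W 1 0) * Fg U W 1 0 + 4*Eg U W 1 0 * Fg U W 1 1 + 2*Eg U W 0 1 * Fg U W 2 0"
  unfolding Eg_def Fg_def by (simp add: algebra_simps power2_eq_square power3_eq_cube)

lemma F12g: fixes U W :: "idx \<Rightarrow> 'a::comm_ring_1"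
  shows "6 * Fg U W 1 2 = (Eg U W 3 0 + 3*Eg U W 1 2 - Eg U W 1 0*Eg U W 2 0 - Eg U W 0 2*Eg U W 1 0 - 2*Eg U W 0 1*Eg U W 1 1 + Eg U W 0 1^2*Eg U W 1 0) * Fg U W 0 0 + (2*Eg U W 1 1 - 2*Eg U W 0 1*Eg U W 1 0) * Fg U W 0 1 + (2*Eg U W 2 0 - Eg U W 0 1^2) * Fg U W 1 0 + 4*Eg U W 0 1 * Fg U W 1 1 + 2*Eg U W 1 0 * Fg U W 0 2"
  unfolding Eg_def Fg_def by (simp add: algebra_simps power2_eq_square power3_eq_cube)

lemma newton3: fixes y1 y2 y3 z1 z2 z3 :: "'a::comm_ring_1"
  shows "6*(y1*z1^3 + y2*z2^3 + y3*z3^3) = 6*(z1+z2+z3)*(y1*z1^2+y2*z2^2+y3*z3^2) - 3*((z1+z2+z3)^2 - (z1^2+z2^2+z3^2))*(y1*z1+y2*z2+y3*z3) + ((z1+z2+z3)^3 - 3*(z1+z2+z3)*(z1^2+z2^2+z3^2) + 2*(z1^3+z2^3+z3^3))*(y1+y2+y3)"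
  by (simp add: algebra_simps power2_eq_square power3_eq_cube)

lemma nat3_induct: fixes n :: nat assumes "P 0" "P 1" "P 2" "\<And>n. P n \<Longrightarrow> P (n+1) \<Longrightarrow> P (n+2) \<Longrightarrow> P (n+3)"
  shows "P n"
proof (induct n rule: less_induct)
  case (less n)
  show ?case
  proof (cases "n < 3")
    case True then have "n = 0 \<or> n = 1 \<or> n = 2" by auto
    then show ?thesis using assms by auto
  next
    case False then obtain m where m: "n = m + 3" by (metis add.commute le_Suc_ex not_less)
    then show ?thesis using assms(4)[of m] less[of m] less[of "m+1"] less[of "m+2"] by simp
  qed
qed

lemma comb_add: fixes a2 a3 a4 a5 a6 a7 a8 b2 b3 b4 b5 b6 b7 b8 q2 q3 q4 q5 q6 q7 q8 :: "'a::comm_ring_1"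
  shows "(a2 * q2 + a3 * q3 + a4 * q4 + a5 * q5 + a6 * q6 + a7 * q7 + a8 * q8) +
   (b2 * q2 + b3 * q3 + b4 * q4 + b5 * q5 + b6 * q6 + b7 * q7 + b8 * q8) =
   (a2+b2) * q2 + (a3+b3) * q3 + (a4+b4) * q4 + (a5+b5) * q5 + (a6+b6) * q6 + (a7+b7) * q7 + (a8+b8) * q8"
  by (simp add: distrib_right add_ac)

lemma comb_smult: fixes s a2 a3 a4 a5 a6 a7 a8 q2 q3 q4 q5 q6 q7 q8 :: "'a::comm_ring_1"
  shows "s * (a2 * q2 + a3 * q3 + a4 * q4 + a5 * q5 + a6 * q6 + a7 * q7 + a8 * q8) =
   (s*a2) * q2 + (s*a3) * q3 + (s*a4) * q4 + (s*a5) * q5 + (s*a6) * q6 + (s*a7) * q7 + (s*a8) * q8"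
  by (simp add: distrib_left mult.assoc)

lemma Fg_E_aux: fixes u1 u2 u3 x1 x2 x3 d1 d2 d3 :: "'a::comm_ring_1"
  shows "u1 * (x2^2 + x3^2 - d1^2) + u2 * (x3^2 + x1^2 - d2^2) + u3 * (x1^2 + x2^2 - d3^2)
    = (x1^2 + x2^2 + x3^2) * (u1 + u2 + u3) - (u1 * x1^2 + u2 * x2^2 + u3 * x3^2) - (u1 * d1^2 + u2 * d2^2 + u3 * d3^2)"
  by (simp add: algebra_simps)

lemma Fg_E: fixes U W :: "idx \<Rightarrow> 'a::comm_ring_1"
  shows "Fg U W a b = Eg U W 2 0 * Eg U W a b - Eg U W (a+2) b - Eg U W a (b+2)"
proof -
  have f: "Fg U W a b = (U I1^a * W I1^b) * (U I2^2 + U I3^2 - W I1^2) + (U I2^a * W I2^b) * (U I3^2 + U I1^2 - W I2^2)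
     + (U I3^a * W I3^b) * (U I1^2 + U I2^2 - W I3^2)" by (simp add: Fg_def)
  have e20: "Eg U W 2 0 = U I1^2 + U I2^2 + U I3^2" by (simp add: Eg_def)
  have e0: "Eg U W a b = (U I1^a * W I1^b) + (U I2^a * W I2^b) + (U I3^a * W I3^b)" by (simp add: Eg_def)
  have e1: "Eg U W (a+2) b = (U I1^a * W I1^b) * U I1^2 + (U I2^a * W I2^b) * U I2^2 + (U I3^a * W I3^b) * U I3^2"
    unfolding Eg_def power_add by (simp only: mult.assoc mult.commute mult.left_commute power_0 mult_1_right)
  have e2: "Eg U W a (b+2) = (U I1^a * W I1^b) * W I1^2 + (U I2^a * W I2^b) * W I2^2 + (U I3^a * W I3^b) * W I3^2"
    unfolding Eg_def power_add by (simp only: mult.assoc mult.commute mult.left_commute power_0 mult_1_right)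
  show ?thesis unfolding f e20 e0 e1 e2 by (rule Fg_E_aux)
qed

lemma IC_comb_add: fixes a1 a2 a3 b1 b2 b3 q1 q2 q3 :: "'a::comm_ring_1"
  shows "(a1 * q1 + a2 * q2 + a3 * q3) + (b1 * q1 + b2 * q2 + b3 * q3) = (a1+b1)*q1 + (a2+b2)*q2 + (a3+b3)*q3"
  by (simp add: algebra_simps)

lemma IC_comb_smult: fixes s a1 a2 a3 q1 q2 q3 :: "'a::comm_ring_1"
  shows "s * (a1 * q1 + a2 * q2 + a3 * q3) = (s*a1)*q1 + (s*a2)*q2 + (s*a3)*q3"
  by (simp add: algebra_simps)



lemma var_perm_comp: "var_perm \<sigma> (var_perm \<tau> v) = var_perm (\<sigma> \<circ> \<tau>) v" by (cases v) auto
lemma var_perm_id: "var_perm id v = v" by (cases v) auto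
lemma inj_var_perm: "inj \<sigma> \<Longrightarrow> inj (var_perm \<sigma>)"
  unfolding inj_def apply clarify subgoal for a b by (cases a; cases b) auto done

abbreviation mk :: "(idx \<Rightarrow> idx) \<Rightarrow> (var \<Rightarrow>\<^sub>0 nat) \<Rightarrow> (var \<Rightarrow>\<^sub>0 nat)" where
  "mk \<sigma> n \<equiv> Poly_Mapping.map_key (var_perm \<sigma>) n"

lemma mk_mk: assumes "inj \<sigma>" "inj \<tau>" "\<tau> \<circ> \<sigma> = id" shows "mk \<sigma> (mk \<tau> k) = k"
proof -
  have "mk \<sigma> (mk \<tau> k) = Poly_Mapping.map_key (var_perm \<tau> \<circ> var_perm \<sigma>) k"
    by (rule map_key_compose) (use assms inj_var_perm in auto)
  also have "var_perm \<tau> \<circ> var_perm \<sigma> = (\<lambda>x. x)"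
    by (rule ext) (simp add: var_perm_comp assms(3) var_perm_id)
  finally show ?thesis by (simp add: map_key_id)
qed

lemma bij_inv_facts: assumes "bij \<sigma>" shows "inj (inv \<sigma>)" "inv \<sigma> \<circ> \<sigma> = id" "\<sigma> \<circ> inv \<sigma> = id" "inj \<sigma>"
  using assms bij_imp_bij_inv bij_is_inj inv_o_cancel bij_is_surj[OF assms, unfolded surj_iff] by auto

lemma inj_mk: assumes "bij \<sigma>" shows "inj (\<lambda>n. mk \<sigma> n)"
proof (rule injI)
  fix a b assume "mk \<sigma> a = mk \<sigma> b"
  then have "mk (inv \<sigma>) (mk \<sigma> a) = mk (inv \<sigma>) (mk \<sigma> b)" by simp
  then show "a = b" using mk_mk[of "inv \<sigma>" \<sigma>] bij_inv_facts[OF assms] by simp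
qed

lemma mk_add: "inj \<sigma> \<Longrightarrow> mk \<sigma> (a + b) = mk \<sigma> a + mk \<sigma> b"
  by (rule map_key_plus) (rule inj_var_perm)

lemma pm_induct[case_names zero single plus]:
  assumes "P 0" "\<And>k v. P (Poly_Mapping.single k v)" "\<And>f g. P f \<Longrightarrow> P g \<Longrightarrow> P (f+g)"
  shows "P f"
proof (induct f rule: update_induct)
  case const show ?case by fact
next
  case (update f a b)
  have "Poly_Mapping.update a b f = f + Poly_Mapping.single a b"
    using update(1) by (intro poly_mapping_eqI) (auto simp: lookup_update lookup_add lookup_single when_def in_keys_iff)
  then show ?case using assms update by simp
qed

lemma pp_single: "bij \<sigma> \<Longrightarrow> poly_perm \<sigma> (Poly_Mapping.single k v) = Poly_Mapping.single (mk (inv \<sigma>) k) v"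
proof -
  assume b: "bij \<sigma>"
  have "Poly_Mapping.single k v = Poly_Mapping.single (mk \<sigma> (mk (inv \<sigma>) k)) v"
    using b by (simp add: mk_mk bij_inv_facts)
  then show ?thesis unfolding poly_perm_def using map_key_single[OF inj_mk[OF b]] by metis
qed

lemma pp_add: "bij \<sigma> \<Longrightarrow> poly_perm \<sigma> (p + q) = poly_perm \<sigma> p + poly_perm \<sigma> q"
  unfolding poly_perm_def by (rule map_key_plus) (rule inj_mk)

lemma pp_zero: "bij \<sigma> \<Longrightarrow> poly_perm \<sigma> 0 = 0"
  unfolding poly_perm_def by (rule map_key_zero) (rule inj_mk)

lemma pp_mult: assumes b: "bij \<sigma>" shows "poly_perm \<sigma> (p * q) = poly_perm \<sigma> p * poly_perm \<sigma> q"
proof (induct p rule: pm_induct)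
  case zero then show ?case using b by (simp add: pp_zero)
next
  case (plus f g) then show ?case using b by (simp add: pp_add distrib_right)
next
  case (single k v)
  show ?case
  proof (induct q rule: pm_induct)
    case zero then show ?case using b by (simp add: pp_zero)
  next
    case (plus f g) then show ?case using b by (simp add: pp_add distrib_left)
  next
    case (single k' v')
    show ?case using b by (simp add: mult_single pp_single mk_add bij_inv_facts)
  qed
qed

lemma pp_uminus: assumes b: "bij \<sigma>" shows "poly_perm \<sigma> (- p) = - poly_perm \<sigma> p"
proof -
  have "poly_perm \<sigma> (- p) + poly_perm \<sigma> p = 0" using b by (simp add: pp_add[symmetric] pp_zero)
  then show ?thesis by (simp add: eq_neg_iff_add_eq_0)
qed

lemma pp_diff: "bij \<sigma> \<Longrightarrow> poly_perm \<sigma> (p - q) = poly_perm \<sigma> p - poly_perm \<sigma> q"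
  using pp_add[of \<sigma> p "-q"] pp_uminus[of \<sigma> q] by simp

lemma pp_one: "bij \<sigma> \<Longrightarrow> poly_perm \<sigma> 1 = 1"
proof -
  assume b: "bij \<sigma>"
  have "(1::qpoly) = Poly_Mapping.single 0 1" by (simp add: one_poly_mapping.abs_eq single.abs_eq)
  moreover have "mk (inv \<sigma>) 0 = 0" using b bij_inv_facts(1) inj_var_perm map_key_zero by blast
  ultimately show ?thesis using b pp_single[OF b, of 0 1] by metis
qed

lemma pp_const: "bij \<sigma> \<Longrightarrow> poly_perm \<sigma> (Poly_Mapping.single 0 c) = Poly_Mapping.single 0 c"
  using bij_inv_facts(1) inj_var_perm map_key_zero pp_single by metis

lemma pp_power: "bij \<sigma> \<Longrightarrow> poly_perm \<sigma> (p ^ n) = poly_perm \<sigma> p ^ n"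
  by (induct n) (simp_all add: pp_one pp_mult)

lemma pp_Var: assumes b: "bij \<sigma>" shows "poly_perm \<sigma> (Var v) = Var (var_perm \<sigma> v)"
proof -
  have "mk (inv \<sigma>) (Poly_Mapping.single v 1) = Poly_Mapping.single (var_perm \<sigma> v) 1"
  proof -
    have "var_perm (inv \<sigma>) (var_perm \<sigma> v) = v" using bij_inv_facts(2)[OF b]
      by (simp add: var_perm_comp var_perm_id)
    moreover have "mk (inv \<sigma>) (Poly_Mapping.single (var_perm (inv \<sigma>) (var_perm \<sigma> v)) (1::nat)) = Poly_Mapping.single (var_perm \<sigma> v) 1"
      by (rule map_key_single[OF inj_var_perm[OF bij_inv_facts(1)[OF b]]])
    ultimately show ?thesis by simp
  qed
  then show ?thesis unfolding Var_def using b by (simp add: pp_single)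
qed


lemma UNIV_idx: "(UNIV::idx set) = {I1, I2, I3}"
  using idx.exhaust by auto

section \<open>Symmetric polynomials\<close>

definition const :: "rat \<Rightarrow> qpoly" where "const c = Poly_Mapping.single 0 c"

lemma SymQ_I: "(\<And>\<sigma>. bij \<sigma> \<Longrightarrow> poly_perm \<sigma> p = p) \<Longrightarrow> p \<in> SymQ"
  unfolding SymQ_def by auto
lemma SymQ_D: "p \<in> SymQ \<Longrightarrow> bij \<sigma> \<Longrightarrow> poly_perm \<sigma> p = p"
  unfolding SymQ_def by auto

lemma sym_add: "p \<in> SymQ \<Longrightarrow> q \<in> SymQ \<Longrightarrow> p + q \<in> SymQ"
  by (rule SymQ_I) (simp add: pp_add SymQ_D)
lemma sym_diff: "p \<in> SymQ \<Longrightarrow> q \<in> SymQ \<Longrightarrow> p - q \<in> SymQ"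
  by (rule SymQ_I) (simp add: pp_diff SymQ_D)
lemma sym_mult: "p \<in> SymQ \<Longrightarrow> q \<in> SymQ \<Longrightarrow> p * q \<in> SymQ"
  by (rule SymQ_I) (simp add: pp_mult SymQ_D)
lemma sym_power: "p \<in> SymQ \<Longrightarrow> p ^ n \<in> SymQ"
  by (rule SymQ_I) (simp add: pp_power SymQ_D)
lemma sym_const: "const c \<in> SymQ"
  by (rule SymQ_I) (simp add: pp_const const_def)
lemma sym_zero: "0 \<in> SymQ"
  by (rule SymQ_I) (simp add: pp_zero)
lemma sym_one: "1 \<in> SymQ"
  by (rule SymQ_I) (simp add: pp_one)
lemma sym_numeral: "numeral n \<in> SymQ"
proof -
  have "(numeral n :: qpoly) = const (numeral n)" by (simp add: const_def)
  then show ?thesis using sym_const by metis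
qed
lemma sym_L: "Var Lv \<in> SymQ"
  by (rule SymQ_I) (simp add: pp_Var)

definition E :: "nat \<Rightarrow> nat \<Rightarrow> qpoly" where
  "E a b = x I1 ^ a * d I1 ^ b + x I2 ^ a * d I2 ^ b + x I3 ^ a * d I3 ^ b"

lemma sym_E: "E a b \<in> SymQ"
proof (rule SymQ_I)
  fix \<sigma> :: "idx \<Rightarrow> idx" assume b: "bij \<sigma>"
  have e: "E a b = (\<Sum>j\<in>UNIV. x j ^ a * d j ^ b)" by (simp add: E_def UNIV_idx)
  have "poly_perm \<sigma> (E a b) = x (\<sigma> I1) ^ a * d (\<sigma> I1) ^ b + x (\<sigma> I2) ^ a * d (\<sigma> I2) ^ b + x (\<sigma> I3) ^ a * d (\<sigma> I3) ^ b"
    by (simp add: E_def pp_add pp_mult pp_power pp_Var b)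
  also have "\<dots> = (\<Sum>j\<in>UNIV. x (\<sigma> j) ^ a * d (\<sigma> j) ^ b)"
    by (simp add: UNIV_idx)
  also have "\<dots> = (\<Sum>j\<in>UNIV. x j ^ a * d j ^ b)"
    by (rule sum.reindex_bij_betw[of \<sigma> UNIV UNIV "\<lambda>j. x j ^ a * d j ^ b"]) (use b in \<open>simp add: bij_betw_def bij_def\<close>)
  finally show "poly_perm \<sigma> (E a b) = E a b" using e by simp
qed


abbreviation pts :: "qpoly list" where "pts \<equiv> [pt2, pt3, pt4, pt5, pt6, pt7, pt8]"
abbreviation J :: "qpoly set" where "J \<equiv> ideal_gen_in SymQ pts"

lemma sum7: fixes h :: "nat \<Rightarrow> 'a::comm_monoid_add"
  shows "(\<Sum>j<7. h j) = h 0 + h 1 + h 2 + h 3 + h 4 + h 5 + h 6"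
  by (simp add: eval_nat_numeral add.assoc add.commute add.left_commute)

lemma J_intro: assumes "s2 \<in> SymQ" "s3 \<in> SymQ" "s4 \<in> SymQ" "s5 \<in> SymQ"
   "s6 \<in> SymQ" "s7 \<in> SymQ" "s8 \<in> SymQ"
  shows "s2 * pt2 + s3 * pt3 + s4 * pt4 + s5 * pt5 + s6 * pt6 + s7 * pt7 + s8 * pt8 \<in> J"
proof -
  define c where "c = (\<lambda>j. [s2, s3, s4, s5, s6, s7, s8] ! j)"
  have c0: "c 0 = s2" "c 1 = s3" "c 2 = s4" "c 3 = s5" "c 4 = s6" "c 5 = s7" "c 6 = s8"
    by (simp_all add: c_def eval_nat_numeral)
  have p0: "pts ! 0 = pt2" "pts ! 1 = pt3" "pts ! 2 = pt4" "pts ! 3 = pt5" "pts ! 4 = pt6" "pts ! 5 = pt7" "pts ! 6 = pt8"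
    by (simp_all add: eval_nat_numeral)
  have "\<forall>j<7. c j \<in> SymQ"
  proof (intro allI impI)
    fix j :: nat assume "j < 7"
    then have "j = 0 \<or> j = 1 \<or> j = 2 \<or> j = 3 \<or> j = 4 \<or> j = 5 \<or> j = 6" by linarith
    then show "c j \<in> SymQ" using assms c0 by auto
  qed
  moreover have "s2 * pt2 + s3 * pt3 + s4 * pt4 + s5 * pt5 + s6 * pt6 + s7 * pt7 + s8 * pt8 = (\<Sum>j<7. c j * pts ! j)"
    unfolding sum7 c0 p0 ..
  moreover have l: "length pts = 7" by simp
  ultimately show ?thesis unfolding ideal_gen_in_def l by blast
qed

lemma J_elim: assumes "f \<in> J"
  obtains s2 s3 s4 s5 s6 s7 s8 where "s2 \<in> SymQ" "s3 \<in> SymQ" "s4 \<in> SymQ" "s5 \<in> SymQ"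
   "s6 \<in> SymQ" "s7 \<in> SymQ" "s8 \<in> SymQ"
   "f = s2 * pt2 + s3 * pt3 + s4 * pt4 + s5 * pt5 + s6 * pt6 + s7 * pt7 + s8 * pt8"
proof -
  obtain c where c: "\<forall>j<length pts. c j \<in> SymQ" "f = (\<Sum>j<length pts. c j * pts ! j)"
    using assms unfolding ideal_gen_in_def by blast
  have p0: "pts ! 0 = pt2" "pts ! 1 = pt3" "pts ! 2 = pt4" "pts ! 3 = pt5" "pts ! 4 = pt6" "pts ! 5 = pt7" "pts ! 6 = pt8"
    by (simp_all add: eval_nat_numeral)
  have l: "length pts = 7" by simp
  have "f = c 0 * pt2 + c 1 * pt3 + c 2 * pt4 + c 3 * pt5 + c 4 * pt6 + c 5 * pt7 + c 6 * pt8"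
    using c(2) unfolding l sum7 p0 .
  moreover have "c 0 \<in> SymQ" "c 1 \<in> SymQ" "c 2 \<in> SymQ" "c 3 \<in> SymQ" "c 4 \<in> SymQ" "c 5 \<in> SymQ" "c 6 \<in> SymQ"
    using c(1) unfolding l by auto
  ultimately show ?thesis using that by blast
qed

lemma J_add: assumes "f \<in> J" "g \<in> J" shows "f + g \<in> J"
proof -
  obtain a2 a3 a4 a5 a6 a7 a8 where a: "a2 \<in> SymQ" "a3 \<in> SymQ" "a4 \<in> SymQ" "a5 \<in> SymQ"
   "a6 \<in> SymQ" "a7 \<in> SymQ" "a8 \<in> SymQ" and
   f: "f = a2 * pt2 + a3 * pt3 + a4 * pt4 + a5 * pt5 + a6 * pt6 + a7 * pt7 + a8 * pt8"
    using assms(1) by (rule J_elim)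
  obtain b2 b3 b4 b5 b6 b7 b8 where b: "b2 \<in> SymQ" "b3 \<in> SymQ" "b4 \<in> SymQ" "b5 \<in> SymQ"
   "b6 \<in> SymQ" "b7 \<in> SymQ" "b8 \<in> SymQ" and
   g: "g = b2 * pt2 + b3 * pt3 + b4 * pt4 + b5 * pt5 + b6 * pt6 + b7 * pt7 + b8 * pt8"
    using assms(2) by (rule J_elim)
  have "f + g = (a2+b2) * pt2 + (a3+b3) * pt3 + (a4+b4) * pt4 + (a5+b5) * pt5 + (a6+b6) * pt6 + (a7+b7) * pt7 + (a8+b8) * pt8"
    unfolding f g by (rule comb_add)
  also have "\<dots> \<in> J" by (intro J_intro sym_add a b)
  finally show ?thesis .
qed

lemma J_smult: assumes "f \<in> J" "s \<in> SymQ" shows "s * f \<in> J"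
proof -
  obtain a2 a3 a4 a5 a6 a7 a8 where a: "a2 \<in> SymQ" "a3 \<in> SymQ" "a4 \<in> SymQ" "a5 \<in> SymQ"
   "a6 \<in> SymQ" "a7 \<in> SymQ" "a8 \<in> SymQ" and
   f: "f = a2 * pt2 + a3 * pt3 + a4 * pt4 + a5 * pt5 + a6 * pt6 + a7 * pt7 + a8 * pt8"
    using assms(1) by (rule J_elim)
  have "s * f = (s*a2) * pt2 + (s*a3) * pt3 + (s*a4) * pt4 + (s*a5) * pt5 + (s*a6) * pt6 + (s*a7) * pt7 + (s*a8) * pt8"
    unfolding f by (rule comb_smult)
  also have "\<dots> \<in> J" by (intro J_intro sym_mult a assms(2))
  finally show ?thesis .
qed

lemma J_zero: "0 \<in> J"
  using J_intro[OF sym_zero sym_zero sym_zero sym_zero sym_zero sym_zero sym_zero] by simp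

lemma J_neg: "f \<in> J \<Longrightarrow> - f \<in> J"
  using J_smult[of f "- 1"] sym_diff[OF sym_zero sym_one] by simp

lemma J_diff: "f \<in> J \<Longrightarrow> g \<in> J \<Longrightarrow> f - g \<in> J"
  using J_add[of f "- g"] J_neg by simp

lemma J_div6: assumes "6 * f \<in> J" shows "f \<in> J"
proof -
  have "const (1/6) * (6 * f) = (const (1/6) * const 6) * f" by (simp add: const_def)
  also have "const (1/6) * const 6 = 1" unfolding const_def mult_single by simp
  finally show ?thesis using J_smult[OF assms sym_const, of "1/6"] by simp
qed



fun pj :: "idx \<Rightarrow> qpoly" where "pj I1 = p1" | "pj I2 = p2" | "pj I3 = p3"

definition F :: "nat \<Rightarrow> nat \<Rightarrow> qpoly" where
  "F a b = x I1 ^ a * d I1 ^ b * p1 + x I2 ^ a * d I2 ^ b * p2 + x I3 ^ a * d I3 ^ b * p3"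

lemma F_gens: "F 0 0 = pt2" "F 0 1 = pt3" "F 1 0 = pt4" "F 1 1 = pt5" "F 2 0 = pt6" "F 0 2 = pt7" "F 2 2 = pt8"
  by (simp_all add: F_def pt2_def pt3_def pt4_def pt5_def pt6_def pt7_def pt8_def)

lemma pt_J: "pt2 \<in> J" "pt3 \<in> J" "pt4 \<in> J" "pt5 \<in> J" "pt6 \<in> J" "pt7 \<in> J" "pt8 \<in> J"
  using J_intro[OF sym_one sym_zero sym_zero sym_zero sym_zero sym_zero sym_zero]
    J_intro[OF sym_zero sym_one sym_zero sym_zero sym_zero sym_zero sym_zero]
    J_intro[OF sym_zero sym_zero sym_one sym_zero sym_zero sym_zero sym_zero]
    J_intro[OF sym_zero sym_zero sym_zero sym_one sym_zero sym_zero sym_zero]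
    J_intro[OF sym_zero sym_zero sym_zero sym_zero sym_one sym_zero sym_zero]
    J_intro[OF sym_zero sym_zero sym_zero sym_zero sym_zero sym_one sym_zero]
    J_intro[OF sym_zero sym_zero sym_zero sym_zero sym_zero sym_zero sym_one]
  by simp_all



lemma EF_g: "E = Eg x d" "F = Fg x d"
  by (rule ext, rule ext, simp add: E_def Eg_def F_def Fg_def p1_def p2_def p3_def)+

lemma F_gens2: "F 0 (Suc 0) = pt3" "F (Suc 0) 0 = pt4" "F (Suc 0) (Suc 0) = pt5"
  using F_gens by simp_all

lemma F21: "6 * F 2 1 = (2*E 2 1 - 2*E 1 0*E 1 1 - E 0 1*E 2 0 + E 0 1*E 1 0^2) * F 0 0 + (E 2 0 - E 1 0^2) * F 0 1 + (2*E 1 1 - 2*E 0 1*E 1 0) * F 1 0 + 4*E 1 0 * F 1 1 + 2*E 0 1 * F 2 0"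
  unfolding EF_g by (rule F21g)

lemma F12: "6 * F 1 2 = (E 3 0 + 3*E 1 2 - E 1 0*E 2 0 - E 0 2*E 1 0 - 2*E 0 1*E 1 1 + E 0 1^2*E 1 0) * F 0 0 + (2*E 1 1 - 2*E 0 1*E 1 0) * F 0 1 + (2*E 2 0 - E 0 1^2) * F 1 0 + 4*E 0 1 * F 1 1 + 2*E 1 0 * F 0 2"
  unfolding EF_g by (rule F12g)

lemma Frec_x: "6 * F (a+3) b = 6*E 1 0 * F (a+2) b - 3*(E 1 0^2 - E 2 0) * F (a+1) b + (E 1 0^3 - 3*E 1 0*E 2 0 + 2*E 3 0) * F a b"
proof -
  define Y1 where "Y1 = x I1^a*d I1^b*p1"
  define Y2 where "Y2 = x I2^a*d I2^b*p2"
  define Y3 where "Y3 = x I3^a*d I3^b*p3"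
  have h3: "F (a+3) b = Y1*x I1^3 + Y2*x I2^3 + Y3*x I3^3" unfolding F_def Y1_def Y2_def Y3_def power_add by (simp only: mult.assoc mult.commute mult.left_commute power_one_right)
  have h2: "F (a+2) b = Y1*x I1^2 + Y2*x I2^2 + Y3*x I3^2" unfolding F_def Y1_def Y2_def Y3_def power_add by (simp only: mult.assoc mult.commute mult.left_commute power_one_right)
  have h1: "F (a+1) b = Y1*x I1 + Y2*x I2 + Y3*x I3" unfolding F_def Y1_def Y2_def Y3_def power_add by (simp only: mult.assoc mult.commute mult.left_commute power_one_right)
  have h0: "F a b = Y1 + Y2 + Y3" unfolding F_def Y1_def Y2_def Y3_def by simp
  have e: "E 1 0 = x I1 + x I2 + x I3" "E 2 0 = x I1^2 + x I2^2 + x I3^2" "E 3 0 = x I1^3 + x I2^3 + x I3^3"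
    by (simp_all add: E_def)
  show ?thesis unfolding h3 h2 h1 h0 e by (rule newton3)
qed

lemma Frec_d: "6 * F a (b+3) = 6*E 0 1 * F a (b+2) - 3*(E 0 1^2 - E 0 2) * F a (b+1) + (E 0 1^3 - 3*E 0 1*E 0 2 + 2*E 0 3) * F a b"
proof -
  define Y1 where "Y1 = x I1^a*d I1^b*p1"
  define Y2 where "Y2 = x I2^a*d I2^b*p2"
  define Y3 where "Y3 = x I3^a*d I3^b*p3"
  have h3: "F a (b+3) = Y1*d I1^3 + Y2*d I2^3 + Y3*d I3^3" unfolding F_def Y1_def Y2_def Y3_def power_add by (simp only: mult.assoc mult.commute mult.left_commute power_one_right)
  have h2: "F a (b+2) = Y1*d I1^2 + Y2*d I2^2 + Y3*d I3^2" unfolding F_def Y1_def Y2_def Y3_def power_add by (simp only: mult.assoc mult.commute mult.left_commute power_one_right)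
  have h1: "F a (b+1) = Y1*d I1 + Y2*d I2 + Y3*d I3" unfolding F_def Y1_def Y2_def Y3_def power_add by (simp only: mult.assoc mult.commute mult.left_commute power_one_right)
  have h0: "F a b = Y1 + Y2 + Y3" unfolding F_def Y1_def Y2_def Y3_def by simp
  have e: "E 0 1 = d I1 + d I2 + d I3" "E 0 2 = d I1^2 + d I2^2 + d I3^2" "E 0 3 = d I1^3 + d I2^3 + d I3^3"
    by (simp_all add: E_def)
  show ?thesis unfolding h3 h2 h1 h0 e by (rule newton3)
qed

lemmas symI = sym_mult sym_diff sym_add sym_power sym_E sym_numeral sym_one sym_zero
lemmas JI = J_add J_diff J_smult

lemma Fd_J: assumes "F a 0 \<in> J" "F a 1 \<in> J" "F a 2 \<in> J" shows "F a b \<in> J"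
proof (induct b rule: nat3_induct)
  case (4 n)
  have "6 * F a (n+3) \<in> J" unfolding Frec_d
    by (intro JI symI 4)
  then show ?case by (rule J_div6)
qed (use assms in auto)

lemma F_J: "F a b \<in> J"
proof (induct a arbitrary: b rule: nat3_induct)
  case 1 show ?case by (rule Fd_J) (simp_all add: F_gens F_gens2 pt_J)
next
  case 2 show ?case
  proof (rule Fd_J)
    have "6 * F 1 2 \<in> J" unfolding F12 by (intro JI symI; simp add: F_gens F_gens2 pt_J)
    then show "F 1 2 \<in> J" by (rule J_div6)
  qed (simp_all add: F_gens F_gens2 pt_J)
next
  case 3 show ?case
  proof (rule Fd_J)
    have "6 * F 2 1 \<in> J" unfolding F21 by (intro JI symI; simp add: F_gens F_gens2 pt_J)
    then show "F 2 1 \<in> J" by (rule J_div6)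
  qed (simp_all add: F_gens F_gens2 pt_J)
next
  case (4 n)
  have "6 * F (n+3) b \<in> J" unfolding Frec_x
    by (intro JI symI 4)
  then show ?case by (rule J_div6)
qed



section \<open>Permutations\<close>

fun sw12 :: "idx \<Rightarrow> idx" where "sw12 I1 = I2" | "sw12 I2 = I1" | "sw12 I3 = I3"
fun sw13 :: "idx \<Rightarrow> idx" where "sw13 I1 = I3" | "sw13 I2 = I2" | "sw13 I3 = I1"
fun sw23 :: "idx \<Rightarrow> idx" where "sw23 I1 = I1" | "sw23 I2 = I3" | "sw23 I3 = I2"
fun cyc :: "idx \<Rightarrow> idx" where "cyc I1 = I2" | "cyc I2 = I3" | "cyc I3 = I1"
fun cyc2 :: "idx \<Rightarrow> idx" where "cyc2 I1 = I3" | "cyc2 I2 = I1" | "cyc2 I3 = I2"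

lemma bij_perms: "bij sw12" "bij sw13" "bij sw23" "bij cyc" "bij cyc2"
proof -
  have *: "\<And>f g. (\<And>i. g (f i) = i) \<Longrightarrow> (\<And>i. f (g i) = i) \<Longrightarrow> bij f"
    by (metis bijI' )
  show "bij sw12" by (rule *[where g=sw12]; case_tac i; simp)
  show "bij sw13" by (rule *[where g=sw13]; case_tac i; simp)
  show "bij sw23" by (rule *[where g=sw23]; case_tac i; simp)
  show "bij cyc" by (rule *[where g=cyc2]; case_tac i; simp)
  show "bij cyc2" by (rule *[where g=cyc]; case_tac i; simp)
qed

definition Six :: "(idx \<Rightarrow> idx) set" where "Six = {id, sw12, sw13, sw23, cyc, cyc2}"

lemma Six_bij: "s \<in> Six \<Longrightarrow> bij s"
  unfolding Six_def using bij_perms by auto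

definition tsum :: "((idx \<Rightarrow> idx) \<Rightarrow> 'a::comm_ring_1) \<Rightarrow> 'a" where
  "tsum h = h id + h sw12 + h sw13 + h sw23 + h cyc + h cyc2"

lemma tsum_cong: "(\<And>s. s \<in> Six \<Longrightarrow> h s = g s) \<Longrightarrow> tsum h = tsum g"
  unfolding tsum_def Six_def by simp

lemma tsum_add: "tsum (\<lambda>s. f s + g s) = tsum f + tsum g"
  unfolding tsum_def by (simp add: algebra_simps)

lemma tsum_smult: "tsum (\<lambda>s. c * f s) = c * tsum f"
  unfolding tsum_def by (simp add: algebra_simps)

lemma tsum_const: "tsum (\<lambda>s. c) = 6 * c"
  unfolding tsum_def by (simp add: algebra_simps)

definition S3 :: "(idx \<Rightarrow> 'a::comm_ring_1) \<Rightarrow> 'a" where "S3 h = h I1 + h I2 + h I3"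

lemma perm_id1: "tsum (\<lambda>s. A (s I1) * B (s I2) * C (s I3)) =
  (S3 B * S3 C) * S3 A - S3 C * S3 (\<lambda>j. A j * B j) - S3 B * S3 (\<lambda>j. A j * C j)
  - S3 (\<lambda>j. B j * C j) * S3 A + 2 * S3 (\<lambda>j. A j * B j * C j)"
  unfolding tsum_def S3_def by (simp add: algebra_simps)

lemma perm_id2: "tsum (\<lambda>s. A (s I1) * B (s I2) * C (s I3)) =
  (S3 A * S3 C) * S3 B - S3 C * S3 (\<lambda>j. A j * B j) - S3 A * S3 (\<lambda>j. B j * C j)
  - S3 (\<lambda>j. A j * C j) * S3 B + 2 * S3 (\<lambda>j. A j * B j * C j)"
  unfolding tsum_def S3_def by (simp add: algebra_simps)

lemma perm_id3: "tsum (\<lambda>s. A (s I1) * B (s I2) * C (s I3)) =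
  (S3 A * S3 B) * S3 C - S3 B * S3 (\<lambda>j. A j * C j) - S3 A * S3 (\<lambda>j. B j * C j)
  - S3 (\<lambda>j. A j * B j) * S3 C + 2 * S3 (\<lambda>j. A j * B j * C j)"
  unfolding tsum_def S3_def by (simp add: algebra_simps)

lemma pp_pj: assumes "s \<in> Six" shows "poly_perm s (pj j) = pj (s j)"
proof -
  have b: "bij s" using assms Six_bij by auto
  have "s = id \<or> s = sw12 \<or> s = sw13 \<or> s = sw23 \<or> s = cyc \<or> s = cyc2" using assms unfolding Six_def by auto
  then show ?thesis using b
    by (cases j) (auto simp: p1_def p2_def p3_def pp_add pp_diff pp_power pp_Var add_ac)
qed

definition T :: "idx \<Rightarrow> qpoly \<Rightarrow> qpoly" where
  "T i c = tsum (\<lambda>s. poly_perm s c * pj (s i))"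

lemma T_add: "T i (a + b) = T i a + T i b"
proof -
  have "T i (a + b) = tsum (\<lambda>s. poly_perm s a * pj (s i) + poly_perm s b * pj (s i))"
    unfolding T_def by (rule tsum_cong) (simp add: Six_bij pp_add algebra_simps)
  then show ?thesis unfolding T_def tsum_add .
qed

lemma T_zero: "T i 0 = 0"
  unfolding T_def tsum_def using bij_perms by (simp add: pp_zero)

lemma T_smult: assumes "c \<in> SymQ" shows "T i (c * a) = c * T i a"
proof -
  have "T i (c * a) = tsum (\<lambda>s. c * (poly_perm s a * pj (s i)))"
    unfolding T_def by (rule tsum_cong) (simp add: Six_bij pp_mult SymQ_D[OF assms] algebra_simps)
  then show ?thesis unfolding T_def tsum_smult .
qed

lemma symmetrize: assumes "f \<in> SymQ" "f = c1 * p1 + c2 * p2 + c3 * p3"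
  shows "6 * f = T I1 c1 + T I2 c2 + T I3 c3"
proof -
  have "6 * f = tsum (\<lambda>s. f)" by (simp add: tsum_const)
  also have "\<dots> = tsum (\<lambda>s. poly_perm s c1 * pj (s I1) + poly_perm s c2 * pj (s I2) + poly_perm s c3 * pj (s I3))"
  proof (rule tsum_cong)
    fix s assume s: "s \<in> Six"
    have "f = poly_perm s f" using SymQ_D[OF assms(1) Six_bij[OF s]] by simp
    also have "\<dots> = poly_perm s c1 * poly_perm s (pj I1) + poly_perm s c2 * poly_perm s (pj I2) + poly_perm s c3 * poly_perm s (pj I3)"
      unfolding assms(2) using Six_bij[OF s] by (simp add: pp_add pp_mult)
    finally show "f = poly_perm s c1 * pj (s I1) + poly_perm s c2 * pj (s I2) + poly_perm s c3 * pj (s I3)"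
      using pp_pj[OF s, of I1] pp_pj[OF s, of I2] pp_pj[OF s, of I3] by simp
  qed
  also have "\<dots> = T I1 c1 + T I2 c2 + T I3 c3" unfolding T_def tsum_add by simp
  finally show ?thesis .
qed



lemma one_single: "(1::qpoly) = Poly_Mapping.single 0 1"
  by (simp add: one_poly_mapping.abs_eq single.abs_eq)

lemma Var_pow: "Var v ^ n = Poly_Mapping.single (Poly_Mapping.single v n) (1::rat)"
proof (induct n)
  case 0 show ?case by simp
next
  case (Suc n)
  have "Var v ^ Suc n = Var v * Var v ^ n" by simp
  also have "\<dots> = Poly_Mapping.single (Poly_Mapping.single v 1 + Poly_Mapping.single v n) (1*1)"
    unfolding Suc by (simp only: Var_def mult_single)
  also have "Poly_Mapping.single v 1 + Poly_Mapping.single v n = Poly_Mapping.single v (Suc n)"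
    by (simp add: single_add[symmetric])
  finally show ?case by simp
qed

lemma var_cases: "v = X I1 \<or> v = X I2 \<or> v = X I3 \<or> v = D I1 \<or> v = D I2 \<or> v = D I3 \<or> v = Lv"
  by (cases v) (metis idx.exhaust)+

definition M :: "nat \<Rightarrow> nat \<Rightarrow> nat \<Rightarrow> nat \<Rightarrow> nat \<Rightarrow> nat \<Rightarrow> qpoly" where
  "M a b g c e h = x I1^a * x I2^b * x I3^g * d I1^c * d I2^e * d I3^h"

lemma mono_decomp: "Poly_Mapping.single k (1::rat) =
  Var Lv ^ Poly_Mapping.lookup k Lv * M (Poly_Mapping.lookup k (X I1)) (Poly_Mapping.lookup k (X I2)) (Poly_Mapping.lookup k (X I3))
     (Poly_Mapping.lookup k (D I1)) (Poly_Mapping.lookup k (D I2)) (Poly_Mapping.lookup k (D I3))"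
proof -
  let ?l = "Poly_Mapping.lookup k"
  have k: "k = Poly_Mapping.single Lv (?l Lv) + (Poly_Mapping.single (X I1) (?l (X I1)) + Poly_Mapping.single (X I2) (?l (X I2))
     + Poly_Mapping.single (X I3) (?l (X I3)) + Poly_Mapping.single (D I1) (?l (D I1)) + Poly_Mapping.single (D I2) (?l (D I2))
     + Poly_Mapping.single (D I3) (?l (D I3)))"
  proof (rule poly_mapping_eqI)
    fix v show "?l v = Poly_Mapping.lookup (Poly_Mapping.single Lv (?l Lv) + (Poly_Mapping.single (X I1) (?l (X I1)) + Poly_Mapping.single (X I2) (?l (X I2))
     + Poly_Mapping.single (X I3) (?l (X I3)) + Poly_Mapping.single (D I1) (?l (D I1)) + Poly_Mapping.single (D I2) (?l (D I2))
     + Poly_Mapping.single (D I3) (?l (D I3)))) v"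
      using var_cases[of v] by (elim disjE) (simp_all add: lookup_add lookup_single)
  qed
  have r: "Var Lv ^ ?l Lv * M (?l (X I1)) (?l (X I2)) (?l (X I3)) (?l (D I1)) (?l (D I2)) (?l (D I3))
    = Poly_Mapping.single (Poly_Mapping.single Lv (?l Lv) + (Poly_Mapping.single (X I1) (?l (X I1)) + Poly_Mapping.single (X I2) (?l (X I2))
     + Poly_Mapping.single (X I3) (?l (X I3)) + Poly_Mapping.single (D I1) (?l (D I1)) + Poly_Mapping.single (D I2) (?l (D I2))
     + Poly_Mapping.single (D I3) (?l (D I3)))) 1"
    unfolding M_def Var_pow mult_single mult_1_left ..
  show ?thesis unfolding r by (rule arg_cong[where f="\<lambda>m. Poly_Mapping.single m 1", OF k])
qed

lemma S3_F: "S3 (\<lambda>j. x j ^ a * d j ^ c * pj j) = F a c"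
  by (simp add: S3_def F_def)
lemma S3_E: "S3 (\<lambda>j. x j ^ a * d j ^ c) = E a c"
  by (simp add: S3_def E_def)
lemma S3_FE: "S3 (\<lambda>j. x j ^ a * d j ^ c * pj j * (x j ^ b * d j ^ e)) = F (a+b) (c+e)"
  unfolding S3_def F_def power_add pj.simps by (simp only: mult.assoc mult.commute mult.left_commute)
lemma S3_EF: "S3 (\<lambda>j. x j ^ a * d j ^ c * (x j ^ b * d j ^ e * pj j)) = F (a+b) (c+e)"
  unfolding S3_def F_def power_add pj.simps by (simp only: mult.assoc mult.commute mult.left_commute)
lemma S3_EE: "S3 (\<lambda>j. x j ^ a * d j ^ c * (x j ^ b * d j ^ e)) = E (a+b) (c+e)"
  unfolding S3_def E_def power_add pj.simps by (simp only: mult.assoc mult.commute mult.left_commute)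
lemma S3_T1: "S3 (\<lambda>j. x j ^ a * d j ^ c * pj j * (x j ^ b * d j ^ e) * (x j ^ g * d j ^ h)) = F (a+b+g) (c+e+h)"
  unfolding S3_def F_def power_add pj.simps by (simp only: mult.assoc mult.commute mult.left_commute)
lemma S3_T2: "S3 (\<lambda>j. x j ^ a * d j ^ c * (x j ^ b * d j ^ e * pj j) * (x j ^ g * d j ^ h)) = F (a+b+g) (c+e+h)"
  unfolding S3_def F_def power_add pj.simps by (simp only: mult.assoc mult.commute mult.left_commute)
lemma S3_T3: "S3 (\<lambda>j. x j ^ a * d j ^ c * (x j ^ b * d j ^ e) * (x j ^ g * d j ^ h * pj j)) = F (a+b+g) (c+e+h)"
  unfolding S3_def F_def power_add pj.simps by (simp only: mult.assoc mult.commute mult.left_commute)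

lemma pp_M: "bij s \<Longrightarrow> poly_perm s (M a b g c e h) =
   x (s I1)^a * x (s I2)^b * x (s I3)^g * d (s I1)^c * d (s I2)^e * d (s I3)^h"
  by (simp add: M_def pp_mult pp_power pp_Var)

lemma T_M1: "T I1 (M a b g c e h) \<in> J"
proof -
  have "T I1 (M a b g c e h) = tsum (\<lambda>s. (x (s I1) ^ a * d (s I1) ^ c * pj (s I1)) * (x (s I2) ^ b * d (s I2) ^ e) * (x (s I3) ^ g * d (s I3) ^ h))"
    unfolding T_def by (rule tsum_cong) (simp add: pp_M Six_bij mult_ac)
  also have "\<dots> \<in> J"
    unfolding perm_id1[where A="\<lambda>j. x j ^ a * d j ^ c * pj j" and B = "\<lambda>j. x j ^ b * d j ^ e" and C = "\<lambda>j. x j ^ g * d j ^ h"]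
    unfolding S3_F S3_E S3_FE S3_EF S3_EE S3_T1 S3_T2 S3_T3
    by (intro JI symI F_J)
  finally show ?thesis .
qed

lemma T_M2: "T I2 (M a b g c e h) \<in> J"
proof -
  have "T I2 (M a b g c e h) = tsum (\<lambda>s. (x (s I1) ^ a * d (s I1) ^ c) * (x (s I2) ^ b * d (s I2) ^ e * pj (s I2)) * (x (s I3) ^ g * d (s I3) ^ h))"
    unfolding T_def by (rule tsum_cong) (simp add: pp_M Six_bij mult_ac)
  also have "\<dots> \<in> J"
    unfolding perm_id2[where A="\<lambda>j. x j ^ a * d j ^ c" and B = "\<lambda>j. x j ^ b * d j ^ e * pj j" and C = "\<lambda>j. x j ^ g * d j ^ h"]
    unfolding S3_F S3_E S3_FE S3_EF S3_EE S3_T1 S3_T2 S3_T3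
    by (intro JI symI F_J)
  finally show ?thesis .
qed

lemma T_M3: "T I3 (M a b g c e h) \<in> J"
proof -
  have "T I3 (M a b g c e h) = tsum (\<lambda>s. (x (s I1) ^ a * d (s I1) ^ c) * (x (s I2) ^ b * d (s I2) ^ e) * (x (s I3) ^ g * d (s I3) ^ h * pj (s I3)))"
    unfolding T_def by (rule tsum_cong) (simp add: pp_M Six_bij mult_ac)
  also have "\<dots> \<in> J"
    unfolding perm_id3[where A="\<lambda>j. x j ^ a * d j ^ c" and B = "\<lambda>j. x j ^ b * d j ^ e" and C = "\<lambda>j. x j ^ g * d j ^ h * pj j"]
    unfolding S3_F S3_E S3_FE S3_EF S3_EE S3_T1 S3_T2 S3_T3
    by (intro JI symI F_J)
  finally show ?thesis .
qed

lemma T_J: "T i c \<in> J"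
proof (induct c rule: pm_induct)
  case zero show ?case by (simp add: T_zero J_zero)
next
  case (plus f g) then show ?case by (simp add: T_add J_add)
next
  case (single k v)
  have "Poly_Mapping.single k v = const v * Poly_Mapping.single k 1"
    by (simp add: const_def mult_single)
  then have "T i (Poly_Mapping.single k v) = const v * (Var Lv ^ Poly_Mapping.lookup k Lv * T i (M (Poly_Mapping.lookup k (X I1)) (Poly_Mapping.lookup k (X I2)) (Poly_Mapping.lookup k (X I3))
     (Poly_Mapping.lookup k (D I1)) (Poly_Mapping.lookup k (D I2)) (Poly_Mapping.lookup k (D I3))))"
    by (simp add: T_smult sym_const sym_power sym_L mono_decomp[of k])
  also have "\<dots> \<in> J"
    by (intro J_smult sym_const sym_power sym_L; cases i) (simp_all add: T_M1 T_M2 T_M3)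
  finally show ?case .
qed



lemma sum3: fixes h :: "nat \<Rightarrow> 'a::comm_monoid_add"
  shows "(\<Sum>j<3. h j) = h 0 + h 1 + h 2"
  by (simp add: eval_nat_numeral add.assoc add.commute add.left_commute)

lemma IC_intro: "c1 * p1 + c2 * p2 + c3 * p3 \<in> I_C"
proof -
  define c where "c = (\<lambda>j. [c1, c2, c3] ! j)"
  have c0: "c 0 = c1" "c 1 = c2" "c 2 = c3" by (simp_all add: c_def eval_nat_numeral)
  have p0: "[p1,p2,p3] ! 0 = p1" "[p1,p2,p3] ! 1 = p2" "[p1,p2,p3] ! 2 = p3" by (simp_all add: eval_nat_numeral)
  have "c1 * p1 + c2 * p2 + c3 * p3 = (\<Sum>j<3. c j * [p1,p2,p3] ! j)"
    unfolding sum3 c0 p0 ..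
  moreover have l: "length [p1,p2,p3] = 3" by simp
  ultimately show ?thesis unfolding I_C_def ideal_gen_in_def l by blast
qed

lemma IC_elim: assumes "f \<in> I_C" obtains c1 c2 c3 where "f = c1 * p1 + c2 * p2 + c3 * p3"
proof -
  obtain c where c: "f = (\<Sum>j<length [p1,p2,p3]. c j * [p1,p2,p3] ! j)"
    using assms unfolding I_C_def ideal_gen_in_def by blast
  have p0: "[p1,p2,p3] ! 0 = p1" "[p1,p2,p3] ! 1 = p2" "[p1,p2,p3] ! 2 = p3" by (simp_all add: eval_nat_numeral)
  have l: "length [p1,p2,p3] = 3" by simp
  have "f = c 0 * p1 + c 1 * p2 + c 2 * p3" using c unfolding l sum3 p0 .
  then show ?thesis using that by blast
qed

lemma IC_add: assumes "f \<in> I_C" "g \<in> I_C" shows "f + g \<in> I_C"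
proof -
  obtain a1 a2 a3 where f: "f = a1 * p1 + a2 * p2 + a3 * p3" using assms(1) by (rule IC_elim)
  obtain b1 b2 b3 where g: "g = b1 * p1 + b2 * p2 + b3 * p3" using assms(2) by (rule IC_elim)
  show ?thesis unfolding f g IC_comb_add by (rule IC_intro)
qed

lemma IC_smult: assumes "f \<in> I_C" shows "s * f \<in> I_C"
proof -
  obtain a1 a2 a3 where f: "f = a1 * p1 + a2 * p2 + a3 * p3" using assms(1) by (rule IC_elim)
  show ?thesis unfolding f IC_comb_smult by (rule IC_intro)
qed

lemma pt_IC: "pt2 \<in> I_C" "pt3 \<in> I_C" "pt4 \<in> I_C" "pt5 \<in> I_C" "pt6 \<in> I_C" "pt7 \<in> I_C" "pt8 \<in> I_C"
proof -
  show "pt2 \<in> I_C" using IC_intro[of 1 1 1] by (simp add: pt2_def)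
  show "pt3 \<in> I_C" using IC_intro[of "d I1" "d I2" "d I3"] by (simp add: pt3_def)
  show "pt4 \<in> I_C" using IC_intro[of "x I1" "x I2" "x I3"] by (simp add: pt4_def)
  show "pt5 \<in> I_C" using IC_intro[of "x I1 * d I1" "x I2 * d I2" "x I3 * d I3"] by (simp add: pt5_def)
  show "pt6 \<in> I_C" using IC_intro[of "x I1 ^ 2" "x I2 ^ 2" "x I3 ^ 2"] by (simp add: pt6_def)
  show "pt7 \<in> I_C" using IC_intro[of "d I1 ^ 2" "d I2 ^ 2" "d I3 ^ 2"] by (simp add: pt7_def)
  show "pt8 \<in> I_C" using IC_intro[of "x I1 ^ 2 * d I1 ^ 2" "x I2 ^ 2 * d I2 ^ 2" "x I3 ^ 2 * d I3 ^ 2"] by (simp add: pt8_def)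
qed

lemma F_sym: "F a b \<in> SymQ"
proof -
  have "F a b = E 2 0 * E a b - E (a+2) b - E a (b+2)" unfolding EF_g by (rule Fg_E)
  then show ?thesis by (simp add: sym_mult sym_diff sym_E)
qed

lemma pt_sym: "pt2 \<in> SymQ" "pt3 \<in> SymQ" "pt4 \<in> SymQ" "pt5 \<in> SymQ" "pt6 \<in> SymQ" "pt7 \<in> SymQ" "pt8 \<in> SymQ"
  using F_sym[of 0 0] F_sym[of 0 1] F_sym[of 1 0] F_sym[of 1 1] F_sym[of 2 0] F_sym[of 0 2] F_sym[of 2 2]
  by (simp_all add: F_gens F_gens2)

lemma J_sub: assumes "f \<in> J" shows "f \<in> I_C_sym"
proof -
  obtain a2 a3 a4 a5 a6 a7 a8 where a: "a2 \<in> SymQ" "a3 \<in> SymQ" "a4 \<in> SymQ" "a5 \<in> SymQ"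
   "a6 \<in> SymQ" "a7 \<in> SymQ" "a8 \<in> SymQ" and
   f: "f = a2 * pt2 + a3 * pt3 + a4 * pt4 + a5 * pt5 + a6 * pt6 + a7 * pt7 + a8 * pt8"
    using assms by (rule J_elim)
  have "f \<in> SymQ" unfolding f by (intro sym_add sym_mult a pt_sym)
  moreover have "f \<in> I_C" unfolding f by (intro IC_add IC_smult pt_IC)
  ultimately show ?thesis unfolding I_C_sym_def by blast
qed

lemma sub_J: assumes "f \<in> I_C_sym" shows "f \<in> J"
proof -
  have fs: "f \<in> SymQ" and fi: "f \<in> I_C" using assms unfolding I_C_sym_def by auto
  obtain c1 c2 c3 where f: "f = c1 * p1 + c2 * p2 + c3 * p3" using fi by (rule IC_elim)
  have "6 * f = T I1 c1 + T I2 c2 + T I3 c3" by (rule symmetrize[OF fs f])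
  also have "\<dots> \<in> J" by (intro J_add T_J)
  finally show ?thesis by (rule J_div6)
qed

theorem theorem1p2:
  shows "(\<exists>gs. set gs \<subseteq> SymQ \<and> I_C_sym = ideal_gen_in SymQ gs)
       \<and> set [pt2, pt3, pt4, pt5, pt6, pt7, pt8] \<subseteq> I_C_sym
       \<and> I_C_sym = ideal_gen_in SymQ [pt2, pt3, pt4, pt5, pt6, pt7, pt8]"
proof -
  have eq: "I_C_sym = J" using J_sub sub_J by blast
  have sub: "set pts \<subseteq> I_C_sym" using pt_sym pt_IC unfolding I_C_sym_def by auto
  have "set pts \<subseteq> SymQ" using pt_sym by auto
  then show ?thesis using eq sub by blast
qed


end
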